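(* In the model described in the context, with $\tilde k(p)=(1+\theta)p+\alpha(p-p^2)$ for $\theta\ge0$ and $\alpha\ge0$, suppose $\gamma\big((1+\theta)+\alpha(1-2q)\big)>2\alpha q\lambda$. Then the optimal indemnity is $$I^*(x)=\begin{cases}0, & 0< x\le d^*,\\[2pt] x-d^*-\dfrac1\gamma\ln\dfrac{1+\theta+\alpha(1-2qe^{-\lambda x})}{1+\theta+\alpha(1-2qe^{-\lambda d^*})}, & x>d^*,\end{cases}$$ where $d^*\ge0$ is the unique non-negative solution $d$ of the following equation. If $\lambda\ne\gamma$: $$\frac{e^{\gamma d}(1-\alpha q^2e^{-2\lambda d})}{(1+\theta)+\alpha(1-2qe^{-\lambda d})}=1+q\gamma\,\frac{e^{(\gamma-\lambda)d}-1}{\gamma-\lambda}.$$ If $\lambda=\gamma$: $$e^{\lambda d}=(1+q\lambda d)\big((1+\theta)+\alpha(1-2qe^{-\lambda d})\big)+\alpha q^2e^{-\lambda d}.$$ Furthermore, $d^*>0$ if and only if either $\theta>0$ or both $q<1$ and $\alpha>0$.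
   Context: Let $X\ge0$ be a random variable with $\mathbb{P}(X=0)=1-q$, where $q\in(0,1]$, and with density $q\lambda e^{-\lambda x}$ on $(0,\infty)$, where $\lambda>0$. So $S_X(t)=qe^{-\lambda t}$ for $t\ge0$. $\mathcal{I}_c$ is the set of $I:[0,\infty)\to[0,\infty)$ with $0\le I(x)\le x$ and $0\le I(x)-I(y)\le x-y$ for $0\le y\le x$. For $Y\ge0$ with $S_Y(t)=\mathbb{P}(Y>t)$, the premium is $$\pi(Y)=\int_0^\infty\tilde k(S_Y(t))\,dt.$$ The buyer has wealth $w$ and utility $u$ with $u'(x)=e^{-\gamma x}$, $\gamma>0$. She chooses $I\in\mathcal{I}_c$ to maximize $\mathbb{E}[u(w-X+I(X)-\pi(I(X)))]$; the buyer's distortion is the identity. The optimal indemnity is unique up to $\mathbb{P}$-a.s. equality of $I(X)$. *)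

theory Defs
  imports "HOL-Analysis.Analysis"
begin

text \<open>Law of X: atom of mass 1-q at 0 and density q*lam*exp(-lam*x) on (0,inf).
  Expectation of f(X) for this law.\<close>
definition ExpX :: "real \<Rightarrow> real \<Rightarrow> (real \<Rightarrow> real) \<Rightarrow> real" where
  "ExpX q lam f = (1 - q) * f 0 + (LINT x:{0<..}|lborel. q * lam * exp (- lam * x) * f x)"

text \<open>Integrability of f(X) (the atom at 0 is always finite).\<close>
definition ExpX_integrable :: "real \<Rightarrow> real \<Rightarrow> (real \<Rightarrow> real) \<Rightarrow> bool" where
  "ExpX_integrable q lam f = set_integrable lborel {0<..} (\<lambda>x. q * lam * exp (- lam * x) * f x)"

definition ktilde :: "real \<Rightarrow> real \<Rightarrow> real \<Rightarrow> real" where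
  "ktilde \<theta> \<alpha> p = (1 + \<theta>) * p + \<alpha> * (p - p ^ 2)"

definition Ic :: "(real \<Rightarrow> real) set" where
  "Ic = {I. (\<forall>x\<ge>0. 0 \<le> I x \<and> I x \<le> x) \<and>
            (\<forall>x y. 0 \<le> y \<and> y \<le> x \<longrightarrow> 0 \<le> I x - I y \<and> I x - I y \<le> x - y)}"

definition survI :: "real \<Rightarrow> real \<Rightarrow> (real \<Rightarrow> real) \<Rightarrow> real \<Rightarrow> real" where
  "survI q lam I t = ExpX q lam (\<lambda>x. if I x > t then 1 else 0)"

definition premium :: "real \<Rightarrow> real \<Rightarrow> real \<Rightarrow> real \<Rightarrow> (real \<Rightarrow> real) \<Rightarrow> real" where
  "premium \<theta> \<alpha> q lam I = (LINT t:{0..}|lborel. ktilde \<theta> \<alpha> (survI q lam I t))"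

definition EU :: "(real \<Rightarrow> real) \<Rightarrow> real \<Rightarrow> real \<Rightarrow> real \<Rightarrow> real \<Rightarrow> real \<Rightarrow> (real \<Rightarrow> real) \<Rightarrow> real" where
  "EU u w \<theta> \<alpha> q lam I = ExpX q lam (\<lambda>x. u (w - x + I x - premium \<theta> \<alpha> q lam I))"

definition EU_integrable :: "(real \<Rightarrow> real) \<Rightarrow> real \<Rightarrow> real \<Rightarrow> real \<Rightarrow> real \<Rightarrow> real \<Rightarrow> (real \<Rightarrow> real) \<Rightarrow> bool" where
  "EU_integrable u w \<theta> \<alpha> q lam I = ExpX_integrable q lam (\<lambda>x. u (w - x + I x - premium \<theta> \<alpha> q lam I))"

text \<open>Optimality. Since u is bounded above (u' = exp(-gamma x), gamma > 0), a non-integrable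
  expected utility equals -infinity, so such indemnities can never beat an integrable one.\<close>
definition optimal :: "(real \<Rightarrow> real) \<Rightarrow> real \<Rightarrow> real \<Rightarrow> real \<Rightarrow> real \<Rightarrow> real \<Rightarrow> (real \<Rightarrow> real) \<Rightarrow> bool" where
  "optimal u w \<theta> \<alpha> q lam I \<longleftrightarrow> I \<in> Ic \<and> EU_integrable u w \<theta> \<alpha> q lam I \<and>
     (\<forall>J\<in>Ic. EU_integrable u w \<theta> \<alpha> q lam J \<longrightarrow> EU u w \<theta> \<alpha> q lam J \<le> EU u w \<theta> \<alpha> q lam I)"

text \<open>I(X) = J(X) almost surely (q > 0: the density is positive on (0,inf); atom at 0).\<close>
definition ae_equal_X :: "real \<Rightarrow> (real \<Rightarrow> real) \<Rightarrow> (real \<Rightarrow> real) \<Rightarrow> bool" where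
  "ae_equal_X q I J \<longleftrightarrow> (q < 1 \<longrightarrow> I 0 = J 0) \<and> (AE x in lborel. x > 0 \<longrightarrow> I x = J x)"

definition dstar_eq :: "real \<Rightarrow> real \<Rightarrow> real \<Rightarrow> real \<Rightarrow> real \<Rightarrow> real \<Rightarrow> bool" where
  "dstar_eq \<theta> \<alpha> q lam \<gamma> d \<longleftrightarrow>
     (if lam \<noteq> \<gamma> then
        exp (\<gamma> * d) * (1 - \<alpha> * q ^ 2 * exp (- 2 * lam * d)) / ((1 + \<theta>) + \<alpha> * (1 - 2 * q * exp (- lam * d)))
          = 1 + q * \<gamma> * (exp ((\<gamma> - lam) * d) - 1) / (\<gamma> - lam)
      else
        exp (lam * d) = (1 + q * lam * d) * ((1 + \<theta>) + \<alpha> * (1 - 2 * q * exp (- lam * d)))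
                        + \<alpha> * q ^ 2 * exp (- lam * d))"

definition Istar :: "real \<Rightarrow> real \<Rightarrow> real \<Rightarrow> real \<Rightarrow> real \<Rightarrow> real \<Rightarrow> real \<Rightarrow> real" where
  "Istar \<theta> \<alpha> q lam \<gamma> d x =
     (if x \<le> d then 0
      else x - d - (1 / \<gamma>) * ln ((1 + \<theta> + \<alpha> * (1 - 2 * q * exp (- lam * x)))
                                  / (1 + \<theta> + \<alpha> * (1 - 2 * q * exp (- lam * d)))))"

end

theory Submission
  imports Defs
begin


locale prm =
  fixes q lam g th al :: real
  assumes q0: "0 < q" and q1: "q \<le> 1" and lam0: "lam > 0" and g0: "g > 0"
    and th0: "th \<ge> 0" and al0: "al \<ge> 0"
    and hc: "g * ((1 + th) + al * (1 - 2 * q)) > 2 * al * q * lam"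
begin

definition kp :: "real \<Rightarrow> real" where "kp x = 1 + th + al * (1 - 2 * q * exp (- lam * x))"
definition S :: "real \<Rightarrow> real" where "S x = q * exp (- lam * x)"
definition ell :: "real \<Rightarrow> real" where "ell x = x - ln (kp x) / g"

lemma base_pos: "(1 + th) + al * (1 - 2 * q) > 0"
proof -
  have "2 * al * q * lam \<ge> 0" using al0 q0 lam0 by simp
  with hc g0 show ?thesis by (smt (verit) mult_nonpos_nonneg mult.commute)
qed

lemma kp_ge: "x \<ge> 0 \<Longrightarrow> kp x \<ge> (1 + th) + al * (1 - 2 * q)"
proof -
  assume "x \<ge> 0"
  hence "exp (- lam * x) \<le> 1" using lam0 by simp
  hence "q * exp (- lam * x) \<le> q" using q0 by simp
  hence "1 - 2 * q \<le> 1 - 2 * q * exp (- lam * x)" by simp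
  thus ?thesis unfolding kp_def using al0 by (simp add: mult_left_mono)
qed

lemma kp_pos: "x \<ge> 0 \<Longrightarrow> kp x > 0"
  using kp_ge base_pos by force

lemma kp_le: "kp x \<le> 1 + th + al"
  unfolding kp_def using al0 q0 by (simp add: algebra_simps)

lemma kp_mono: "x \<le> y \<Longrightarrow> kp x \<le> kp y"
proof -
  assume "x \<le> y"
  hence "exp (- lam * y) \<le> exp (- lam * x)" using lam0 by simp
  hence "q * exp (- lam * y) \<le> q * exp (- lam * x)" using q0 by simp
  hence "1 - 2 * q * exp (- lam * x) \<le> 1 - 2 * q * exp (- lam * y)" by simp
  thus ?thesis unfolding kp_def using al0 by (simp add: mult_left_mono)
qed

lemma key_ineq: "x \<ge> 0 \<Longrightarrow> g * kp x > 2 * al * q * lam * exp (- lam * x)"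
proof -
  assume x: "x \<ge> 0"
  define e where "e = exp (- lam * x)"
  have e1: "e \<le> 1" "e > 0" using x lam0 by (auto simp: e_def)
  have "g * kp x - 2 * al * q * lam * e = g * (1 + th + al) - 2 * al * q * (g + lam) * e"
    unfolding kp_def e_def[symmetric] by (simp add: algebra_simps)
  also have "\<dots> \<ge> g * (1 + th + al) - 2 * al * q * (g + lam)"
  proof -
    have "2 * al * q * (g + lam) * e \<le> 2 * al * q * (g + lam)"
      using e1 al0 q0 g0 lam0 by (simp add: mult_left_le)
    thus ?thesis by simp
  qed
  finally show ?thesis using hc unfolding e_def by (simp add: algebra_simps)
qed

lemma kp_deriv: "(kp has_real_derivative 2 * al * q * lam * exp (- lam * x)) (at x)"
  unfolding kp_def[abs_def]
  by (auto intro!: derivative_eq_intros simp: algebra_simps)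

lemma ell_deriv: "x \<ge> 0 \<Longrightarrow> (ell has_real_derivative 1 - (2 * al * q * lam * exp (- lam * x)) / kp x / g) (at x)"
  unfolding ell_def[abs_def]
  using kp_pos[of x] kp_deriv[of x] g0
  by (auto intro!: derivative_eq_intros simp: algebra_simps)

lemma ell_mono: "0 \<le> x \<Longrightarrow> x \<le> y \<Longrightarrow> ell x \<le> ell y"
proof -
  assume xy: "0 \<le> x" "x \<le> y"
  show ?thesis
  proof (rule DERIV_nonneg_imp_nondecreasing[OF xy(2)])
    fix t assume t: "x \<le> t" "t \<le> y"
    hence t0: "t \<ge> 0" using xy by simp
    have "(2 * al * q * lam * exp (- lam * t)) / kp t / g \<le> 1"
      using key_ineq[OF t0] kp_pos[OF t0] g0 by (simp add: field_simps)
    thus "\<exists>y. DERIV ell t :> y \<and> 0 \<le> y" using ell_deriv[OF t0] by force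
  qed
qed

lemma x_minus_ell: "x \<ge> 0 \<Longrightarrow> x - ell x = ln (kp x) / g"
  unfolding ell_def by simp

lemma x_minus_ell_mono: "0 \<le> x \<Longrightarrow> x \<le> y \<Longrightarrow> x - ell x \<le> y - ell y"
  using kp_mono[of x y] kp_pos[of x] g0 by (simp add: ell_def divide_right_mono)

end

context prm begin

definition kt :: "real \<Rightarrow> real" where "kt p = ktilde th al p"
definition Gf :: "real \<Rightarrow> real" where
  "Gf d = (if g = lam then d else (exp ((g - lam) * d) - 1) / (g - lam))"
definition Aa :: "real \<Rightarrow> real" where "Aa d = exp (g * d) / kp d"
definition F :: "real \<Rightarrow> real" where
  "F d = (1 - q) + q * lam * Gf d + Aa d * (kt (S d) - 1)"
definition Aad :: "real \<Rightarrow> real" where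
  "Aad d = exp (g * d) * (g * kp d - 2 * al * q * lam * exp (- lam * d)) / (kp d)^2"

lemma kt_alt: "kt p = (1 + th) * p + al * (p - p^2)"
  unfolding kt_def ktilde_def by simp

lemma ktS: "kt (S x) = S x * kp x + al * (S x)^2"
  unfolding kt_alt kp_def S_def by (simp add: algebra_simps power2_eq_square)

lemma Gf_deriv: "(Gf has_real_derivative exp ((g - lam) * d)) (at d)"
proof (cases "g = lam")
  case True
  then show ?thesis unfolding Gf_def[abs_def] by (auto intro!: derivative_eq_intros)
next
  case False
  hence ne: "g - lam \<noteq> 0" by simp
  show ?thesis unfolding Gf_def[abs_def] using False
    by (auto intro!: derivative_eq_intros simp: ne)
qed

lemma Aa_deriv: "d \<ge> 0 \<Longrightarrow> (Aa has_real_derivative Aad d) (at d)"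
  unfolding Aa_def[abs_def] Aad_def
  using kp_pos[of d] kp_deriv[of d]
  by (auto intro!: derivative_eq_intros simp: field_simps power2_eq_square)

lemma ktS_deriv: "((\<lambda>d. kt (S d)) has_real_derivative - q * lam * exp (- lam * d) * kp d) (at d)"
  unfolding kt_alt S_def kp_def
  by (auto intro!: derivative_eq_intros simp: algebra_simps power2_eq_square)

lemma F_deriv: "d \<ge> 0 \<Longrightarrow> (F has_real_derivative Aad d * (kt (S d) - 1)) (at d)"
proof -
  assume d: "d \<ge> 0"
  have der: "(F has_real_derivative (q * lam * exp ((g - lam) * d) + (Aad d * (kt (S d) - 1) + Aa d * (- q * lam * exp (- lam * d) * kp d)))) (at d)"
    unfolding F_def[abs_def]
    by (auto intro!: derivative_eq_intros Gf_deriv Aa_deriv[OF d] ktS_deriv)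
  have z: "q * lam * exp ((g - lam) * d) + Aa d * (- q * lam * exp (- lam * d) * kp d) = 0"
  proof -
    have e: "exp ((g - lam) * d) = exp (g * d) * exp (- lam * d)"
      by (simp add: exp_add[symmetric] left_diff_distrib)
    show ?thesis using kp_pos[OF d] unfolding Aa_def e by simp
  qed
  have eq: "q * lam * exp ((g - lam) * d) + (Aad d * (kt (S d) - 1) + Aa d * (- q * lam * exp (- lam * d) * kp d))
     = Aad d * (kt (S d) - 1)" using z by linarith
  show ?thesis by (rule DERIV_cong[OF der eq])
qed

lemma Aad_pos: "d \<ge> 0 \<Longrightarrow> Aad d > 0"
  unfolding Aad_def using key_ineq[of d] kp_pos[of d] by simp

lemma F_cont: "continuous_on {0..} F"
  by (rule continuous_at_imp_continuous_on) (auto intro: DERIV_isCont F_deriv)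

lemma S_pos: "S x > 0" unfolding S_def using q0 by simp
lemma S_le: "x \<ge> 0 \<Longrightarrow> S x \<le> q" unfolding S_def using q0 lam0 by (simp add: mult_left_le)
lemma S_strict: "x < y \<Longrightarrow> S y < S x" unfolding S_def using q0 lam0 by simp

lemma kt_strict: "0 \<le> p1 \<Longrightarrow> p1 < p2 \<Longrightarrow> p2 \<le> q \<Longrightarrow> kt p1 < kt p2"
proof -
  assume p: "0 \<le> p1" "p1 < p2" "p2 \<le> q"
  have "kt p2 - kt p1 = (p2 - p1) * ((1 + th + al) - al * (p1 + p2))"
    unfolding kt_alt by (simp add: algebra_simps power2_eq_square)
  moreover have "al * (p1 + p2) \<le> al * (2 * q)" using p al0 by (intro mult_left_mono) auto
  hence "(1 + th + al) - al * (p1 + p2) > 0" using base_pos by (simp add: algebra_simps)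
  hence "(p2 - p1) * ((1 + th + al) - al * (p1 + p2)) > 0" using p by simp
  ultimately show ?thesis by linarith
qed

lemma kt_nonneg: "0 \<le> p \<Longrightarrow> p \<le> 1 \<Longrightarrow> kt p \<ge> 0"
  unfolding kt_alt using th0 al0 by (simp add: power2_eq_square mult_left_le)

lemma kt_le: "0 \<le> p \<Longrightarrow> kt p \<le> (1 + th + al) * p"
  unfolding kt_alt using al0 by (simp add: algebra_simps power2_eq_square)

lemma kt0: "kt 0 = 0" unfolding kt_alt by simp

lemma ktS_strict: "0 \<le> x \<Longrightarrow> x < y \<Longrightarrow> kt (S y) < kt (S x)"
  using kt_strict[of "S y" "S x"] S_pos[of y] S_strict[of x y] S_le[of x] by simp

lemma F0: "F 0 * kp 0 = th + al * (1 - q)^2"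
proof -
  have G0: "Gf 0 = 0" by (simp add: Gf_def)
  have S0: "S 0 = q" by (simp add: S_def)
  have k0: "kp 0 \<noteq> 0" using kp_pos[of 0] by simp
  have "F 0 * kp 0 = (1 - q) * kp 0 + (kt q - 1)"
    unfolding F_def G0 S0 Aa_def using k0 by (simp add: field_simps)
  also have "\<dots> = th + al * (1 - q)^2"
    unfolding kp_def kt_alt by (simp add: algebra_simps power2_eq_square)
  finally show ?thesis .
qed

lemma F0_nonneg: "F 0 \<ge> 0"
proof -
  have "F 0 * kp 0 \<ge> 0" using F0 th0 al0 by simp
  thus ?thesis using kp_pos[of 0] by (simp add: zero_le_mult_iff)
qed

lemma F0_zero_iff: "F 0 = 0 \<longleftrightarrow> th = 0 \<and> (al = 0 \<or> q = 1)"
proof -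
  have k: "kp 0 \<noteq> 0" using kp_pos[of 0] by simp
  have "F 0 = 0 \<longleftrightarrow> F 0 * kp 0 = 0" using k by simp
  also have "\<dots> \<longleftrightarrow> th + al * (1 - q)^2 = 0" using F0 by simp
  also have "\<dots> \<longleftrightarrow> th = 0 \<and> al * (1 - q)^2 = 0"
    using th0 al0 by (metis add_nonneg_eq_0_iff mult_nonneg_nonneg zero_le_power2)
  also have "\<dots> \<longleftrightarrow> th = 0 \<and> (al = 0 \<or> q = 1)" by auto
  finally show ?thesis .
qed


lemma Aa_pos: "d \<ge> 0 \<Longrightarrow> Aa d > 0" unfolding Aa_def using kp_pos[of d] by simp

lemma ktS_mono: "0 \<le> x \<Longrightarrow> x \<le> y \<Longrightarrow> kt (S y) \<le> kt (S x)"
  using ktS_strict[of x y] by (cases "x = y") auto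

lemma F_neg_exists: "\<exists>D\<ge>0. F D < 0"
proof -
  define c where "c = 1 + th + al"
  have c1: "c \<ge> 1" using th0 al0 by (simp add: c_def)
  define d1 where "d1 = ln (2 * c) / lam"
  have d10: "d1 \<ge> 0" using c1 lam0 by (simp add: d1_def)
  have "exp (lam * d1) = 2 * c" using c1 lam0 by (simp add: d1_def)
  hence "exp (- lam * d1) = 1 / (2 * c)"
    by (simp add: exp_minus inverse_eq_divide)
  hence "S d1 = q / (2 * c)" by (simp add: S_def)
  hence Sd1: "S d1 \<le> 1 / (2 * c)" using q0 q1 c1 by (simp add: divide_right_mono)
  have kt1: "kt (S d1) \<le> 1/2"
  proof -
    have "kt (S d1) \<le> c * S d1" using kt_le[of "S d1"] S_pos[of d1] by (simp add: c_def)
    also have "\<dots> \<le> c * (1 / (2 * c))" using Sd1 c1 by (intro mult_left_mono) auto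
    also have "\<dots> = 1/2" using c1 by simp
    finally show ?thesis .
  qed
  define H where "H t = F t + Aa t / 2" for t
  define D where "D = max d1 (2 * c * (\<bar>F d1\<bar> + Aa d1 + 1) / g)"
  have D1: "d1 \<le> D" by (simp add: D_def)
  have HD: "H D \<le> H d1"
  proof (rule DERIV_nonpos_imp_nonincreasing[OF D1])
    fix t assume t: "d1 \<le> t" "t \<le> D"
    hence t0: "t \<ge> 0" using d10 by simp
    have "(H has_real_derivative Aad t * (kt (S t) - 1) + Aad t / 2) (at t)"
      unfolding H_def[abs_def] by (auto intro!: derivative_eq_intros F_deriv[OF t0] Aa_deriv[OF t0])
    moreover have "Aad t * (kt (S t) - 1) + Aad t / 2 = Aad t * (kt (S t) - 1/2)"
      by (simp add: algebra_simps)
    moreover have "kt (S t) \<le> 1/2" using ktS_mono[OF d10 t(1)] kt1 by simp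
    hence "Aad t * (kt (S t) - 1/2) \<le> 0" using Aad_pos[OF t0] by (simp add: mult_nonneg_nonpos)
    ultimately show "\<exists>y. DERIV H t :> y \<and> y \<le> 0" by auto
  qed
  have D0: "D \<ge> 0" using d10 D1 by simp
  have "Aa D \<ge> exp (g * D) / c"
    unfolding Aa_def using kp_pos[OF D0] kp_le[of D]
    by (intro divide_left_mono) (auto simp: c_def)
  moreover have "exp (g * D) \<ge> 1 + g * D" by simp
  hence "exp (g * D) / c \<ge> (1 + g * D) / c" using c1 by (intro divide_right_mono) auto
  moreover have "g * D \<ge> 2 * c * (\<bar>F d1\<bar> + Aa d1 + 1)"
  proof -
    have "D \<ge> 2 * c * (\<bar>F d1\<bar> + Aa d1 + 1) / g" by (simp add: D_def)
    thus ?thesis using g0 by (simp add: field_simps)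
  qed
  hence "(1 + g * D) / c \<ge> 2 * (\<bar>F d1\<bar> + Aa d1 + 1)"
    using c1 by (simp add: field_simps)
  ultimately have AD: "Aa D \<ge> 2 * (\<bar>F d1\<bar> + Aa d1 + 1)" by linarith
  have "F D = H D - Aa D / 2" by (simp add: H_def)
  also have "\<dots> \<le> F d1 + Aa d1 / 2 - Aa D / 2" using HD by (simp add: H_def)
  also have "\<dots> < 0" using AD Aa_pos[OF d10] abs_ge_self[of "F d1"] by (simp add: field_simps)
  finally show ?thesis using D0 by blast
qed

lemma F_root_exists: "\<exists>d\<ge>0. F d = 0"
proof -
  obtain D where D: "D \<ge> 0" "F D < 0" using F_neg_exists by blast
  have "continuous_on {0..D} F" using F_cont by (rule continuous_on_subset) auto
  from IVT2'[of F D 0 0, OF _ _ D(1) this] D F0_nonneg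
  show ?thesis by auto
qed

lemma F_root_unique:
  assumes a: "a \<ge> 0" "F a = 0" and b: "b \<ge> 0" "F b = 0" and ab: "a < b"
  shows False
proof (cases "kt (S a) \<le> 1")
  case True
  have "F b < F a"
  proof (rule DERIV_neg_imp_decreasing_open[OF ab])
    fix t assume t: "a < t" "t < b"
    hence t0: "t \<ge> 0" using a by simp
    have "kt (S t) < 1" using ktS_strict[OF a(1) t(1)] True by simp
    hence "Aad t * (kt (S t) - 1) < 0" using Aad_pos[OF t0] by (simp add: mult_pos_neg)
    thus "\<exists>y. DERIV F t :> y \<and> y < 0" using F_deriv[OF t0] by blast
  next
    show "continuous_on {a..b} F" using F_cont by (rule continuous_on_subset) (use a in auto)
  qed
  thus False using a b by simp
next
  case False
  have apos: "a > 0"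
  proof (rule ccontr)
    assume "\<not> a > 0"
    hence "a = 0" using a by simp
    hence "th = 0 \<and> (al = 0 \<or> q = 1)" using a F0_zero_iff by simp
    hence "kt q \<le> 1" unfolding kt_alt using q0 q1 by (auto simp: power2_eq_square)
    moreover have "S 0 = q" by (simp add: S_def)
    ultimately show False using False \<open>a = 0\<close> by simp
  qed
  have "F 0 < F a"
  proof (rule DERIV_pos_imp_increasing_open[OF apos])
    fix t assume t: "0 < t" "t < a"
    hence t0: "t \<ge> 0" by simp
    have "kt (S t) > 1" using ktS_strict[OF t0 t(2)] False by simp
    hence "Aad t * (kt (S t) - 1) > 0" using Aad_pos[OF t0] by simp
    thus "\<exists>y. DERIV F t :> y \<and> y > 0" using F_deriv[OF t0] by blast
  next
    show "continuous_on {0..a} F" using F_cont by (rule continuous_on_subset) auto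
  qed
  thus False using a F0_nonneg by simp
qed

lemma F_unique: "a \<ge> 0 \<Longrightarrow> F a = 0 \<Longrightarrow> b \<ge> 0 \<Longrightarrow> F b = 0 \<Longrightarrow> a = b"
  using F_root_unique[of a b] F_root_unique[of b a] by (cases a b rule: linorder_cases) auto

lemma root_pos_iff: "d \<ge> 0 \<Longrightarrow> F d = 0 \<Longrightarrow> (d > 0 \<longleftrightarrow> (th > 0 \<or> (q < 1 \<and> al > 0)))"
proof -
  assume d: "d \<ge> 0" "F d = 0"
  have "d = 0 \<longleftrightarrow> F 0 = 0"
  proof
    assume "d = 0" thus "F 0 = 0" using d by simp
  next
    assume "F 0 = 0" thus "d = 0" using F_unique[of d 0] d by simp
  qed
  thus ?thesis using d(1) F0_zero_iff th0 al0 q1 by auto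
qed


lemma alg1:
  fixes X E k :: real
  assumes k: "k = 1 + th + al * (1 - 2 * q * E)" "k \<noteq> 0" and gl: "g \<noteq> lam"
  shows "X * (1 - al * q^2 * E^2) / k - (1 + q * g * (X * E - 1) / (g - lam))
       = - ((1 - q) + q * lam * ((X * E - 1) / (g - lam)) + X / k * (((1 + th) * (q * E) + al * (q * E - (q * E)^2)) - 1))"
proof -
  have gl': "g - lam \<noteq> 0" using gl by simp
  show ?thesis using k(2) gl' unfolding k(1)[symmetric]
    apply (simp add: field_simps power2_eq_square)
    unfolding k(1) by (simp add: algebra_simps)
qed

lemma alg2:
  fixes X E k dd :: real
  assumes k: "k = 1 + th + al * (1 - 2 * q * E)" "k > 0" and XE: "X * E = 1"
  shows "(X = (1 + q * lam * dd) * k + al * q^2 * E) \<longleftrightarrow>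
         ((1 - q) + q * lam * dd + X / k * (((1 + th) * (q * E) + al * (q * E - (q * E)^2)) - 1) = 0)"
proof -
  have "(1 - q) + q * lam * dd + X / k * (((1 + th) * (q * E) + al * (q * E - (q * E)^2)) - 1)
      = ((1 + q * lam * dd) * k + al * q^2 * E - X) / k"
  proof -
    have "X * ((1 + th) * (q * E) + al * (q * E - (q * E)^2)) = q * k + al * q^2 * E"
      unfolding k(1) using XE by (simp add: algebra_simps power2_eq_square)
         (metis (no_types, lifting) mult.assoc mult.left_commute mult_1)
    thus ?thesis using k(2) by (simp add: field_simps)
  qed
  thus ?thesis using k(2) by auto
qed

lemma dstar_iff: "d \<ge> 0 \<Longrightarrow> dstar_eq th al q lam g d \<longleftrightarrow> F d = 0"
proof -
  assume d: "d \<ge> 0"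
  define E where "E = exp (- lam * d)"
  define X where "X = exp (g * d)"
  have kpd: "kp d = 1 + th + al * (1 - 2 * q * E)" by (simp add: kp_def E_def)
  have Fd: "F d = (1 - q) + q * lam * Gf d + X / kp d * (((1 + th) * (q * E) + al * (q * E - (q * E)^2)) - 1)"
    by (simp add: F_def Aa_def X_def kt_alt S_def E_def)
  have e1: "exp ((g - lam) * d) = X * E"
    by (simp add: X_def E_def exp_add[symmetric] left_diff_distrib)
  have e2: "exp (- 2 * lam * d) = E^2"
    by (simp add: E_def power2_eq_square exp_add[symmetric])
  show ?thesis
  proof (cases "lam = g")
    case False
    hence gl: "g \<noteq> lam" by simp
    have "dstar_eq th al q lam g d \<longleftrightarrow>
      X * (1 - al * q^2 * E^2) / kp d = 1 + q * g * (X * E - 1) / (g - lam)"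
      unfolding dstar_eq_def if_P[OF False] e1 e2 X_def[symmetric] E_def[symmetric] kpd[symmetric] ..
    also have "\<dots> \<longleftrightarrow> X * (1 - al * q^2 * E^2) / kp d - (1 + q * g * (X * E - 1) / (g - lam)) = 0"
      by simp
    also have "X * (1 - al * q^2 * E^2) / kp d - (1 + q * g * (X * E - 1) / (g - lam)) = - F d"
      unfolding alg1[OF kpd _ gl, OF kp_pos[OF d, THEN less_imp_neq, symmetric]] Fd
      by (simp add: Gf_def gl e1)
    finally show ?thesis by simp
  next
    case True
    have XE: "X * E = 1" using True by (simp add: X_def E_def exp_add[symmetric])
    have nl: "\<not> (lam \<noteq> g)" using True by simp
    have eX: "exp (lam * d) = X" using True by (simp add: X_def)
    have "dstar_eq th al q lam g d \<longleftrightarrow> X = (1 + q * lam * d) * kp d + al * q^2 * E"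
      unfolding dstar_eq_def if_not_P[OF nl] eX E_def[symmetric] kpd[symmetric] ..
    also have "\<dots> \<longleftrightarrow> F d = 0"
    proof -
      have "Gf d = d" unfolding Gf_def using True by simp
      thus ?thesis unfolding alg2[OF kpd kp_pos[OF d] XE] Fd by simp
    qed
    finally show ?thesis .
  qed
qed

end



lemma hk_set:
  fixes f :: "real \<Rightarrow> real"
  assumes I: "(f has_integral I) A" and nn: "\<And>x. x \<in> A \<Longrightarrow> 0 \<le> f x"
    and [measurable]: "A \<in> sets borel" "f \<in> borel_measurable borel"
  shows "set_integrable lborel A f" "(LINT x:A|lborel. f x) = I"
proof -
  have n1: "integral\<^sup>N lborel (\<lambda>x. indicator A x * f x) = ennreal I"
    by (rule nn_integral_has_integral_lebesgue[OF nn I])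
  have I0: "I \<ge> 0" using has_integral_nonneg[OF I nn] .
  have hb: "has_bochner_integral lborel (\<lambda>x. indicator A x * f x) I"
    by (rule has_bochner_integral_nn_integral) (use n1 I0 nn in \<open>auto simp: indicator_def\<close>)
  show "set_integrable lborel A f" using hb unfolding set_integrable_def
    by (simp add: has_bochner_integral_iff)
  show "(LINT x:A|lborel. f x) = I" using hb unfolding set_lebesgue_integral_def
    by (simp add: has_bochner_integral_iff)
qed

lemma exp_tail:
  fixes c a :: real
  assumes c: "c > 0"
  shows "set_integrable lborel {a<..} (\<lambda>x. exp (- c * x))"
        "(LINT x:{a<..}|lborel. exp (- c * x)) = exp (- c * a) / c"
proof -
  have h0: "((\<lambda>x. exp (- c * x)) has_integral exp (- c * a) / c) {a..}"
    using has_integral_exp_minus_to_infinity[OF c, of a] by simp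
  have h: "((\<lambda>x. exp (- c * x)) has_integral exp (- c * a) / c) {a<..}"
    using h0 by (subst has_integral_spike_set_eq[where T="{a..}"])
      (auto intro: negligible_subset[OF negligible_sing[of a]])
  show "set_integrable lborel {a<..} (\<lambda>x. exp (- c * x))"
       "(LINT x:{a<..}|lborel. exp (- c * x)) = exp (- c * a) / c"
    by (rule hk_set[OF h]; simp)+
qed

lemma exp_fin:
  fixes b dd :: real and P :: "real \<Rightarrow> real"
  assumes dd: "dd \<ge> 0" and P: "\<And>x. (P has_real_derivative exp (b * x)) (at x)"
  shows "set_integrable lborel {0<..dd} (\<lambda>x. exp (b * x))"
        "(LINT x:{0<..dd}|lborel. exp (b * x)) = P dd - P 0"
proof -
  have h0: "((\<lambda>x. exp (b * x)) has_integral P dd - P 0) {0..dd}"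
    by (rule fundamental_theorem_of_calculus[OF dd])
       (auto intro: has_field_derivative_imp_has_derivative has_real_derivative_iff_has_vector_derivative[THEN iffD1, OF has_field_derivative_at_within[OF P]])
  have h: "((\<lambda>x. exp (b * x)) has_integral P dd - P 0) {0<..dd}"
    using h0 by (subst has_integral_spike_set_eq[where T="{0..dd}"])
      (auto intro: negligible_subset[OF negligible_sing[of 0]])
  show "set_integrable lborel {0<..dd} (\<lambda>x. exp (b * x))"
       "(LINT x:{0<..dd}|lborel. exp (b * x)) = P dd - P 0"
    by (rule hk_set[OF h]; simp)+
qed



locale prmd = prm +
  fixes d :: real
  assumes d0: "d \<ge> 0" and Fd: "F d = 0"
begin

definition Ist :: "real \<Rightarrow> real" where "Ist = Istar th al q lam g d"
definition fd :: "real \<Rightarrow> real" where "fd x = q * lam * exp (- lam * x)"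
definition hh :: "real \<Rightarrow> real" where "hh x = exp (g * (x - Ist x))"

lemma Aa_ell: "Aa d = exp (g * ell d)"
proof -
  have "g * ell d = g * d - ln (kp d)" using g0 by (simp add: ell_def algebra_simps)
  thus ?thesis using kp_pos[OF d0] by (simp add: Aa_def exp_diff)
qed

lemma exp_ell: "x \<ge> 0 \<Longrightarrow> exp (g * ell x) * kp x = exp (g * x)"
proof -
  assume x: "x \<ge> 0"
  have "g * ell x = g * x - ln (kp x)" using g0 by (simp add: ell_def algebra_simps)
  thus ?thesis using kp_pos[OF x] by (simp add: exp_diff)
qed

lemma Ist_le_d: "x \<le> d \<Longrightarrow> Ist x = 0"
  by (simp add: Ist_def Istar_def)

lemma Ist_gt_d: "x > d \<Longrightarrow> Ist x = ell x - ell d"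
proof -
  assume x: "x > d"
  have x0: "x \<ge> 0" using x d0 by simp
  have "ln (kp x / kp d) = ln (kp x) - ln (kp d)"
    using kp_pos[OF x0] kp_pos[OF d0] by (simp add: ln_div)
  hence "Ist x = x - d - (1 / g) * (ln (kp x) - ln (kp d))"
    unfolding Ist_def Istar_def kp_def[symmetric] using x by simp
  thus ?thesis unfolding ell_def by (simp add: diff_divide_distrib algebra_simps)
qed

lemma Ist_max: "x \<ge> 0 \<Longrightarrow> Ist x = max 0 (ell x - ell d)"
proof (cases "x \<le> d")
  case True
  assume "x \<ge> 0"
  thus ?thesis using True Ist_le_d ell_mono[of x d] by simp
next
  case False
  thus ?thesis using Ist_gt_d ell_mono[of d x] d0 by simp
qed

lemma Ist_mono: "x \<le> y \<Longrightarrow> Ist x \<le> Ist y"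
proof -
  assume xy: "x \<le> y"
  show ?thesis
  proof (cases "y \<le> d")
    case True thus ?thesis using xy Ist_le_d by simp
  next
    case False
    hence y: "y > d" by simp
    show ?thesis
    proof (cases "x \<le> d")
      case True thus ?thesis using Ist_le_d Ist_gt_d[OF y] ell_mono[of d y] d0 y by simp
    next
      case False thus ?thesis using Ist_gt_d y ell_mono[of x y] d0 xy by simp
    qed
  qed
qed

lemma Ist_monoI: "mono Ist" by (rule monoI) (rule Ist_mono)

lemma Ist_0: "Ist 0 = 0" using Ist_le_d d0 by simp

lemma Ist_lip: "0 \<le> y \<Longrightarrow> y \<le> x \<Longrightarrow> Ist x - Ist y \<le> x - y"
proof -
  assume yx: "0 \<le> y" "y \<le> x"
  have e: "ell x - ell y \<le> x - y" using x_minus_ell_mono[OF yx] by simp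
  have "max 0 (ell x - ell d) - max 0 (ell y - ell d) \<le> max 0 (ell x - ell y)" by simp
  also have "\<dots> \<le> x - y" using e yx by simp
  finally show ?thesis using Ist_max yx by simp
qed

lemma Ist_Ic: "Ist \<in> Ic"
  unfolding Ic_def
proof (safe)
  fix x :: real assume x: "0 \<le> x"
  show "0 \<le> Ist x" using Ist_mono[OF x] Ist_0 by simp
  show "Ist x \<le> x" using Ist_lip[of 0 x] x Ist_0 by simp
next
  fix x y :: real assume "0 \<le> y" "y \<le> x"
  thus "0 \<le> Ist x - Ist y" "Ist x - Ist y \<le> x - y" using Ist_mono Ist_lip by auto
qed

lemma hh_le: "x \<ge> 0 \<Longrightarrow> hh x \<le> Aa d * kp x"
proof -
  assume x: "x \<ge> 0"
  have "hh x = exp (g * (x - max 0 (ell x - ell d)))" by (simp add: hh_def Ist_max[OF x])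
  also have "\<dots> \<le> exp (g * (x - (ell x - ell d)))" using g0 by simp
  also have "\<dots> = exp (g * ell d) * (exp (g * x) / exp (g * ell x))"
    by (simp add: algebra_simps exp_diff exp_add)
  also have "\<dots> = Aa d * kp x" using exp_ell[OF x] kp_pos[OF x] Aa_ell
    by (simp add: field_simps)
  finally show ?thesis .
qed

lemma hh_ge_d: "x \<ge> d \<Longrightarrow> hh x = Aa d * kp x"
proof -
  assume x: "x \<ge> d"
  hence x0: "x \<ge> 0" using d0 by simp
  have "hh x = exp (g * (x - (ell x - ell d)))" using Ist_max[OF x0] ell_mono[OF d0 x] by (simp add: hh_def)
  also have "\<dots> = exp (g * ell d) * (exp (g * x) / exp (g * ell x))"
    by (simp add: algebra_simps exp_diff exp_add)
  also have "\<dots> = Aa d * kp x" using exp_ell[OF x0] kp_pos[OF x0] Aa_ell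
    by (simp add: field_simps)
  finally show ?thesis .
qed

lemma hh_le_d: "x \<le> d \<Longrightarrow> hh x = exp (g * x)"
  by (simp add: hh_def Ist_le_d)

lemma hh_pos: "hh x > 0" by (simp add: hh_def)

lemma hh_bound: "x \<ge> 0 \<Longrightarrow> hh x \<le> Aa d * (1 + th + al)"
  using hh_le[of x] kp_le[of x] Aa_pos[OF d0] by (smt (verit) mult_left_mono)

lemma Ist_meas[measurable]: "Ist \<in> borel_measurable borel"
  by (rule borel_measurable_mono[OF Ist_monoI])

lemma hh_meas[measurable]: "hh \<in> borel_measurable borel"
  unfolding hh_def[abs_def] by measurable

lemma fd_tail: "set_integrable lborel {t<..} fd" "(LINT x:{t<..}|lborel. fd x) = S t"
proof -
  have "set_integrable lborel {t<..} (\<lambda>x. exp (- lam * x))" "(LINT x:{t<..}|lborel. exp (- lam * x)) = exp (- lam * t) / lam"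
    using exp_tail[OF lam0] by auto
  thus "set_integrable lborel {t<..} fd" "(LINT x:{t<..}|lborel. fd x) = S t"
    unfolding fd_def S_def using lam0 by (auto simp: mult.assoc)
qed

lemma kp_tail: "set_integrable lborel {t<..} (\<lambda>x. fd x * kp x)" "(LINT x:{t<..}|lborel. fd x * kp x) = kt (S t)"
proof -
  have e: "fd x * kp x = (q * lam * (1 + th + al)) * exp (- lam * x) - (2 * al * q^2 * lam) * exp (- (2 * lam) * x)" for x
    unfolding fd_def kp_def by (simp add: algebra_simps power2_eq_square exp_add[symmetric])
  have l2: "2 * lam > 0" using lam0 by simp
  note a = exp_tail[OF lam0, of t] and b = exp_tail[OF l2, of t]
  show "set_integrable lborel {t<..} (\<lambda>x. fd x * kp x)" unfolding e using a b by auto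
  have "(LINT x:{t<..}|lborel. fd x * kp x) = (q * lam * (1 + th + al)) * (exp (- lam * t) / lam) - (2 * al * q^2 * lam) * (exp (- (2 * lam) * t) / (2 * lam))"
    unfolding e using a b by simp
  also have "\<dots> = kt (S t)"
    unfolding kt_alt S_def using lam0 by (simp add: field_simps power2_eq_square exp_add[symmetric])
  finally show "(LINT x:{t<..}|lborel. fd x * kp x) = kt (S t)" .
qed


lemma fd_meas[measurable]: "fd \<in> borel_measurable borel"
  unfolding fd_def[abs_def] by measurable

lemma fd_pos: "fd x > 0" unfolding fd_def using q0 lam0 by simp

lemma fin: "set_integrable lborel {0<..d} (\<lambda>x. fd x * exp (g * x))"
      "(LINT x:{0<..d}|lborel. fd x * exp (g * x)) = q * lam * Gf d"
proof -
  have e: "fd x * exp (g * x) = q * lam * exp ((g - lam) * x)" for x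
    unfolding fd_def by (simp add: exp_add[symmetric] algebra_simps)
  note a = exp_fin[where b="g - lam" and P=Gf and dd=d, OF d0 Gf_deriv]
  have G0: "Gf 0 = 0" by (simp add: Gf_def)
  show "set_integrable lborel {0<..d} (\<lambda>x. fd x * exp (g * x))" unfolding e using a by simp
  show "(LINT x:{0<..d}|lborel. fd x * exp (g * x)) = q * lam * Gf d" unfolding e using a G0 by simp
qed

lemma fh_parts:
  "set_integrable lborel {0<..d} (\<lambda>x. fd x * hh x)"
  "(LINT x:{0<..d}|lborel. fd x * hh x) = q * lam * Gf d"
  "set_integrable lborel {d<..} (\<lambda>x. fd x * hh x)"
  "(LINT x:{d<..}|lborel. fd x * hh x) = Aa d * kt (S d)"
proof -
  have c1: "x \<in> {0<..d} \<Longrightarrow> fd x * hh x = fd x * exp (g * x)" for x using hh_le_d by simp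
  have c2: "x \<in> {d<..} \<Longrightarrow> fd x * hh x = Aa d * (fd x * kp x)" for x using hh_ge_d[of x] by simp
  show "set_integrable lborel {0<..d} (\<lambda>x. fd x * hh x)"
  proof -
    have "set_integrable lborel {0<..d} (\<lambda>x. fd x * hh x) = set_integrable lborel {0<..d} (\<lambda>x. fd x * exp (g * x))"
      by (rule set_integrable_cong) (auto simp: c1)
    thus ?thesis using fin(1) by simp
  qed
  show "(LINT x:{0<..d}|lborel. fd x * hh x) = q * lam * Gf d"
    using set_lebesgue_integral_cong[of "{0<..d}" lborel, OF _ ballI[OF c1, unfolded Ball_def]] fin(2) by simp
  show "set_integrable lborel {d<..} (\<lambda>x. fd x * hh x)"
  proof -
    have "set_integrable lborel {d<..} (\<lambda>x. fd x * hh x) = set_integrable lborel {d<..} (\<lambda>x. Aa d * (fd x * kp x))"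
      by (rule set_integrable_cong) (auto simp: c2)
    thus ?thesis using kp_tail(1)[of d] by simp
  qed
  show "(LINT x:{d<..}|lborel. fd x * hh x) = Aa d * kt (S d)"
    using set_lebesgue_integral_cong[of "{d<..}" lborel, OF _ ballI[OF c2, unfolded Ball_def]] kp_tail(2)[of d] by simp
qed

lemma fh_int: "set_integrable lborel {0<..} (\<lambda>x. fd x * hh x)"
  "(LINT x:{0<..}|lborel. fd x * hh x) = q * lam * Gf d + Aa d * kt (S d)"
proof -
  have U: "{0<..} = {0<..d} \<union> {d<..}" using d0 by auto
  show "set_integrable lborel {0<..} (\<lambda>x. fd x * hh x)"
    unfolding U by (rule set_integrable_Un[OF fh_parts(1) fh_parts(3)]) auto
  show "(LINT x:{0<..}|lborel. fd x * hh x) = q * lam * Gf d + Aa d * kt (S d)"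
    unfolding U by (subst set_integral_Un[OF _ fh_parts(1) fh_parts(3)]) (auto simp: fh_parts)
qed

lemma hh0: "hh 0 = 1" using hh_le_d[of 0] d0 by simp

lemma Eh: "(1 - q) * hh 0 + (LINT x:{0<..}|lborel. fd x * hh x) = Aa d"
  using Fd unfolding hh0 fh_int(2) F_def by (simp add: algebra_simps)

lemma tail_le:
  assumes t: "t \<ge> 0"
  shows "set_integrable lborel {t<..} (\<lambda>x. fd x * hh x)"
    "(LINT x:{t<..}|lborel. fd x * hh x) \<le> Aa d * kt (S t)"
    "t \<ge> d \<Longrightarrow> (LINT x:{t<..}|lborel. fd x * hh x) = Aa d * kt (S t)"
proof -
  show i: "set_integrable lborel {t<..} (\<lambda>x. fd x * hh x)"
    by (rule set_integrable_subset[OF fh_int(1)]) (use t in auto)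
  have i2: "set_integrable lborel {t<..} (\<lambda>x. Aa d * (fd x * kp x))" using kp_tail(1)[of t] by simp
  have "(LINT x:{t<..}|lborel. fd x * hh x) \<le> (LINT x:{t<..}|lborel. Aa d * (fd x * kp x))"
    by (rule set_integral_mono[OF i i2]) (use t hh_le fd_pos in \<open>auto simp: less_imp_le\<close>)
  thus "(LINT x:{t<..}|lborel. fd x * hh x) \<le> Aa d * kt (S t)" using kp_tail(2)[of t] by simp
  assume td: "t \<ge> d"
  have "(LINT x:{t<..}|lborel. fd x * hh x) = (LINT x:{t<..}|lborel. Aa d * (fd x * kp x))"
    by (rule set_lebesgue_integral_cong) (use td hh_ge_d in auto)
  thus "(LINT x:{t<..}|lborel. fd x * hh x) = Aa d * kt (S t)" using kp_tail(2)[of t] by simp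
qed


lemma Ic_0: "J \<in> Ic \<Longrightarrow> J 0 = 0" unfolding Ic_def by force
lemma Ic_le: "J \<in> Ic \<Longrightarrow> x \<ge> 0 \<Longrightarrow> J x \<le> x" unfolding Ic_def by blast
lemma Ic_ge: "J \<in> Ic \<Longrightarrow> x \<ge> 0 \<Longrightarrow> J x \<ge> 0" unfolding Ic_def by blast

lemma survI_eq: "J \<in> Ic \<Longrightarrow> s \<ge> 0 \<Longrightarrow>
  survI q lam J s = (LINT x:{0<..}|lborel. fd x * (if s < J x then 1 else 0))"
  unfolding survI_def ExpX_def fd_def using Ic_0[of J] by simp

lemma per_s:
  assumes J: "J \<in> Ic" "mono J" and s: "s \<ge> 0"
  shows "(\<integral>\<^sup>+x. ennreal (indicator {0<..} x * (fd x * hh x) * (if s < J x then 1 else 0)) \<partial>lborel)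
           \<le> ennreal (Aa d * kt (survI q lam J s))"
    and "(\<forall>x. 0 \<le> x \<and> x \<le> d \<longrightarrow> J x = 0) \<Longrightarrow>
         (\<integral>\<^sup>+x. ennreal (indicator {0<..} x * (fd x * hh x) * (if s < J x then 1 else 0)) \<partial>lborel)
           = ennreal (Aa d * kt (survI q lam J s))"
    and "0 \<le> survI q lam J s" "survI q lam J s \<le> S s"
proof -
  have Jm[measurable]: "J \<in> borel_measurable borel" by (rule borel_measurable_mono[OF J(2)])
  define B where "B = {x. 0 < x \<and> s < J x}"
  have surv: "survI q lam J s = (LINT x:{0<..}|lborel. fd x * (if s < J x then 1 else 0))"
    by (rule survI_eq[OF J(1) s])
  have "(B = {} \<and> survI q lam J s = 0 \<and>
         (\<integral>\<^sup>+x. ennreal (indicator {0<..} x * (fd x * hh x) * (if s < J x then 1 else 0)) \<partial>lborel) = 0)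
      \<or> (\<exists>t\<ge>s. survI q lam J s = S t \<and>
         (\<integral>\<^sup>+x. ennreal (indicator {0<..} x * (fd x * hh x) * (if s < J x then 1 else 0)) \<partial>lborel)
            = ennreal (LINT x:{t<..}|lborel. fd x * hh x) \<and>
         ((\<forall>x. 0 \<le> x \<and> x \<le> d \<longrightarrow> J x = 0) \<longrightarrow> t \<ge> d))"
  proof (cases "B = {}")
    case True
    have z: "\<And>x. indicator {0<..} x * (if s < J x then 1 else 0) = (0::real)"
      using True unfolding B_def by (auto simp: indicator_def)
    have "survI q lam J s = (LINT x|lborel. indicator {0<..} x * (fd x * (if s < J x then 1 else 0)))"
      unfolding surv set_lebesgue_integral_def by simp
    also have "\<dots> = (LINT x|lborel. 0)"
    proof -
      have "(\<lambda>x. indicator {0<..} x * (fd x * (if s < J x then 1 else 0))) = (\<lambda>x. 0::real)"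
        by (rule ext) (metis (no_types, lifting) z mult.commute mult.left_commute mult_zero_left)
      thus ?thesis by (simp only:) simp
    qed
    finally have "survI q lam J s = 0" by simp
    moreover have "(\<integral>\<^sup>+x. ennreal (indicator {0<..} x * (fd x * hh x) * (if s < J x then 1 else 0)) \<partial>lborel) = 0"
    proof -
      have "\<And>x. indicator {0<..} x * (fd x * hh x) * (if s < J x then 1 else 0) = (0::real)"
        using z by (metis (no_types, lifting) mult.commute mult.left_commute mult_zero_left)
      hence "(\<lambda>x. ennreal (indicator {0<..} x * (fd x * hh x) * (if s < J x then 1 else 0))) = (\<lambda>x. 0)"
        by (intro ext) (simp only: ennreal_0)
      thus ?thesis by (simp only:) simp
    qed
    ultimately show ?thesis using True by simp
  next
    case False
    define t where "t = Inf B"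
    have bdd: "bdd_below B" unfolding B_def by (rule bdd_belowI[of _ 0]) auto
    have sB: "\<And>b. b \<in> B \<Longrightarrow> s < b"
    proof -
      fix b assume "b \<in> B"
      hence "0 < b" "s < J b" by (auto simp: B_def)
      thus "s < b" using Ic_le[OF J(1), of b] by simp
    qed
    have ts: "s \<le> t" unfolding t_def by (rule cInf_greatest[OF False]) (use sB in force)
    have key: "x \<noteq> t \<Longrightarrow> indicator {0<..} x * (if s < J x then 1 else 0) = (indicator {t<..} x :: real)" for x
    proof -
      assume xt: "x \<noteq> t"
      show ?thesis
      proof (cases "x > t")
        case True
        then obtain b where b: "b \<in> B" "b < x" using cInf_less_iff[OF False bdd] unfolding t_def by blast
        hence "s < J x" using J(2) unfolding B_def mono_def by (smt (verit) mem_Collect_eq)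
        moreover have "x > 0" using True ts s by simp
        ultimately show ?thesis using True by simp
      next
        case False
        hence xt': "x < t" using xt by simp
        have "\<not> (0 < x \<and> s < J x)"
        proof
          assume "0 < x \<and> s < J x"
          hence "x \<in> B" by (simp add: B_def)
          hence "t \<le> x" unfolding t_def by (rule cInf_lower[OF _ bdd])
          thus False using xt' by simp
        qed
        thus ?thesis using xt' by (auto simp: indicator_def)
      qed
    qed
    have AEk: "AE x in lborel. indicator {0<..} x * (if s < J x then 1 else 0) = (indicator {t<..} x :: real)"
      using AE_lborel_singleton[of t] by eventually_elim (use key in auto)
    have t0: "t \<ge> 0" using ts s by simp
    have "survI q lam J s = (LINT x|lborel. indicator {0<..} x * (fd x * (if s < J x then 1 else 0)))"
      unfolding surv set_lebesgue_integral_def by simp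
    also have "\<dots> = (LINT x|lborel. indicator {t<..} x * fd x)"
      by (rule integral_cong_AE) (use AEk in \<open>auto elim!: eventually_mono simp: algebra_simps\<close>)
    also have "\<dots> = S t" using fd_tail(2)[of t] unfolding set_lebesgue_integral_def by simp
    finally have sv: "survI q lam J s = S t" .
    have "(\<integral>\<^sup>+x. ennreal (indicator {0<..} x * (fd x * hh x) * (if s < J x then 1 else 0)) \<partial>lborel)
        = (\<integral>\<^sup>+x. ennreal (indicator {t<..} x * (fd x * hh x)) \<partial>lborel)"
      by (rule nn_integral_cong_AE) (use AEk in \<open>auto elim!: eventually_mono simp: algebra_simps\<close>)
    also have "\<dots> = ennreal (LINT x|lborel. indicator {t<..} x * (fd x * hh x))"
      by (rule nn_integral_eq_integral)
        (use tail_le(1)[OF t0] fd_pos hh_pos in \<open>auto simp: set_integrable_def indicator_def less_imp_le\<close>)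
    also have "\<dots> = ennreal (LINT x:{t<..}|lborel. fd x * hh x)"
      unfolding set_lebesgue_integral_def by simp
    finally have nn: "(\<integral>\<^sup>+x. ennreal (indicator {0<..} x * (fd x * hh x) * (if s < J x then 1 else 0)) \<partial>lborel)
        = ennreal (LINT x:{t<..}|lborel. fd x * hh x)" .
    have td: "(\<forall>x. 0 \<le> x \<and> x \<le> d \<longrightarrow> J x = 0) \<longrightarrow> t \<ge> d"
    proof
      assume v: "\<forall>x. 0 \<le> x \<and> x \<le> d \<longrightarrow> J x = 0"
      show "t \<ge> d" unfolding t_def
      proof (rule cInf_greatest[OF False])
        fix b assume "b \<in> B"
        hence "0 < b" "s < J b" by (auto simp: B_def)
        thus "d \<le> b" using v s by (cases "b \<le> d") auto
      qed
    qed
    show ?thesis using ts sv nn td by blast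
  qed
  note cs = this
  let ?N = "(\<integral>\<^sup>+x. ennreal (indicator {0<..} x * (fd x * hh x) * (if s < J x then 1 else 0)) \<partial>lborel)"
  show "?N \<le> ennreal (Aa d * kt (survI q lam J s))"
    using cs
  proof (elim disjE exE conjE)
    assume "?N = 0" thus ?thesis by simp
  next
    fix t assume t: "t \<ge> s" "survI q lam J s = S t" "?N = ennreal (LINT x:{t<..}|lborel. fd x * hh x)"
    have t0: "t \<ge> 0" using t s by simp
    show ?thesis unfolding t(3) t(2) by (rule ennreal_leI[OF tail_le(2)[OF t0]])
  qed
  show "(\<forall>x. 0 \<le> x \<and> x \<le> d \<longrightarrow> J x = 0) \<Longrightarrow> ?N = ennreal (Aa d * kt (survI q lam J s))"
    using cs
  proof (elim disjE exE conjE)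
    assume "?N = 0" "survI q lam J s = 0" thus ?thesis by (simp add: kt0)
  next
    fix t assume v: "\<forall>x. 0 \<le> x \<and> x \<le> d \<longrightarrow> J x = 0"
      and t: "t \<ge> s" "survI q lam J s = S t" "?N = ennreal (LINT x:{t<..}|lborel. fd x * hh x)"
      "(\<forall>x. 0 \<le> x \<and> x \<le> d \<longrightarrow> J x = 0) \<longrightarrow> t \<ge> d"
    have t0: "t \<ge> 0" using t s by simp
    have "t \<ge> d" using t(4) v by blast
    thus ?thesis unfolding t(3) t(2) using tail_le(3)[OF t0] by simp
  qed
  show "0 \<le> survI q lam J s"
    using cs
  proof (elim disjE exE conjE)
    assume "survI q lam J s = 0" thus ?thesis by simp
  next
    fix t assume t: "t \<ge> s" "survI q lam J s = S t"
    show ?thesis using t S_pos[of t] by simp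
  qed
  show "survI q lam J s \<le> S s"
    using cs
  proof (elim disjE exE conjE)
    assume "survI q lam J s = 0" thus ?thesis using S_pos[of s] by simp
  next
    fix t assume t: "t \<ge> s" "survI q lam J s = S t"
    show ?thesis using t S_strict[of s t] by (cases "s = t") auto
  qed
qed


definition gg :: "real \<Rightarrow> real" where "gg x = indicator {0<..} x * (fd x * hh x)"

lemma gg_meas[measurable]: "gg \<in> borel_measurable borel"
  unfolding gg_def[abs_def] by measurable

lemma gg_nn: "gg x \<ge> 0" unfolding gg_def using fd_pos[of x] hh_pos[of x] by (simp add: indicator_def)

lemma tonelli:
  assumes J: "J \<in> Ic" "mono J"
  shows "(\<integral>\<^sup>+x. ennreal (gg x * J x) \<partial>lborel)
       = (\<integral>\<^sup>+s. indicator {0..} s * (\<integral>\<^sup>+x. ennreal (gg x * (if s < J x then 1 else 0)) \<partial>lborel) \<partial>lborel)"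
proof -
  have Jm[measurable]: "J \<in> borel_measurable borel" by (rule borel_measurable_mono[OF J(2)])
  define H where "H x s = ennreal (gg x * (if 0 \<le> s \<and> s < J x then 1 else 0))" for x s
  have Hm: "case_prod H \<in> borel_measurable (lborel \<Otimes>\<^sub>M lborel)"
    unfolding H_def[abs_def] by measurable
  have inner1: "(\<integral>\<^sup>+s. H x s \<partial>lborel) = ennreal (gg x * J x)" for x
  proof (cases "x > 0")
    case True
    have J0: "J x \<ge> 0" using Ic_ge[OF J(1), of x] True by simp
    have "(\<integral>\<^sup>+s. H x s \<partial>lborel) = (\<integral>\<^sup>+s. ennreal (gg x) * indicator {0..<J x} s \<partial>lborel)"
      by (rule nn_integral_cong) (auto simp: H_def indicator_def)
    also have "\<dots> = ennreal (gg x) * emeasure lborel {0..<J x}"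
      by (rule nn_integral_cmult_indicator) simp
    also have "\<dots> = ennreal (gg x * J x)" using J0 gg_nn[of x] by (simp add: ennreal_mult)
    finally show ?thesis .
  next
    case False
    hence "gg x = 0" by (simp add: gg_def)
    thus ?thesis by (simp add: H_def)
  qed
  have inner2: "(\<integral>\<^sup>+x. H x s \<partial>lborel) = indicator {0..} s * (\<integral>\<^sup>+x. ennreal (gg x * (if s < J x then 1 else 0)) \<partial>lborel)" for s
  proof (cases "s \<ge> 0")
    case True thus ?thesis by (simp add: H_def)
  next
    case False thus ?thesis by (simp add: H_def)
  qed
  have "(\<integral>\<^sup>+x. ennreal (gg x * J x) \<partial>lborel) = (\<integral>\<^sup>+x. (\<integral>\<^sup>+s. H x s \<partial>lborel) \<partial>lborel)"
    by (simp add: inner1)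
  also have "\<dots> = (\<integral>\<^sup>+s. (\<integral>\<^sup>+x. H x s \<partial>lborel) \<partial>lborel)"
    by (rule lborel_pair.Fubini'[OF Hm, symmetric])
  also have "\<dots> = (\<integral>\<^sup>+s. indicator {0..} s * (\<integral>\<^sup>+x. ennreal (gg x * (if s < J x then 1 else 0)) \<partial>lborel) \<partial>lborel)"
    by (simp add: inner2)
  finally show ?thesis .
qed


lemma surv_int: assumes J: "J \<in> Ic" "mono J"
  shows "set_integrable lborel {0<..} (\<lambda>x. fd x * (if s < J x then 1 else 0))"
proof -
  have Jm[measurable]: "J \<in> borel_measurable borel" by (rule borel_measurable_mono[OF J(2)])
  show ?thesis
    by (rule set_integrable_bound[OF fd_tail(1)[of 0]])
       (auto simp: set_borel_measurable_def fd_pos less_imp_le)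
qed

lemma surv_anti: assumes J: "J \<in> Ic" "mono J" and s: "0 \<le> s1" "s1 \<le> s2"
  shows "survI q lam J s2 \<le> survI q lam J s1"
  unfolding survI_eq[OF J(1) s(1)] survI_eq[OF J(1) order.trans[OF s]]
  by (rule set_integral_mono[OF surv_int[OF J] surv_int[OF J]]) (use s fd_pos in \<open>auto simp: less_imp_le\<close>)

lemma exp_tail0:
  fixes c :: real assumes c: "c > 0"
  shows "set_integrable lborel {0..} (\<lambda>x. exp (- c * x))"
proof -
  have h0: "((\<lambda>x. exp (- c * x)) has_integral exp (- c * 0) / c) {0..}"
    using has_integral_exp_minus_to_infinity[OF c, of 0] by simp
  show ?thesis by (rule hk_set[OF h0]) auto
qed

lemma x_fd_int: "set_integrable lborel {0<..} (\<lambda>x. x * fd x)"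
proof -
  have l2: "lam / 2 > 0" using lam0 by simp
  have i: "set_integrable lborel {0<..} (\<lambda>x. (2 * q) * exp (- (lam / 2) * x))"
    using exp_tail(1)[OF l2, of 0] by simp
  show ?thesis
  proof (rule set_integrable_bound[OF i])
    show "set_borel_measurable lborel {0<..} (\<lambda>x. x * fd x)"
      unfolding set_borel_measurable_def by measurable
    show "AE x in lborel. x \<in> {0<..} \<longrightarrow> norm (x * fd x) \<le> norm (2 * q * exp (- (lam / 2) * x))"
    proof (intro AE_I2 impI)
      fix x :: real assume x: "x \<in> {0<..}"
      have "lam * x / 2 \<le> exp (lam * x / 2)" using exp_ge_add_one_self[of "lam * x / 2"] by linarith
      hence l: "lam * x \<le> 2 * exp (lam / 2 * x)" by simp
      have e: "exp (lam / 2 * x) * exp (- lam * x) = exp (- (lam / 2) * x)"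
        by (simp add: exp_add[symmetric] algebra_simps)
      have "x * fd x = (lam * x) * (q * exp (- lam * x))" by (simp add: fd_def algebra_simps)
      also have "\<dots> \<le> (2 * exp (lam / 2 * x)) * (q * exp (- lam * x))"
        using q0 l by (intro mult_right_mono) auto
      also have "\<dots> = 2 * q * (exp (lam / 2 * x) * exp (- lam * x))" by (simp add: algebra_simps)
      also have "\<dots> = 2 * q * exp (- (lam / 2) * x)" unfolding e ..
      finally have "x * fd x \<le> 2 * q * exp (- (lam / 2) * x)" .
      thus "norm (x * fd x) \<le> norm (2 * q * exp (- (lam / 2) * x))"
        using x fd_pos[of x] q0 by simp
    qed
  qed
qed


end



context prmd begin

lemma set_nonneg: "(\<And>x. x \<in> A \<Longrightarrow> 0 \<le> f x) \<Longrightarrow> 0 \<le> (LINT x:A|M. (f x::real))"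
  unfolding set_lebesgue_integral_def by (rule integral_nonneg_AE, rule AE_I2) (auto simp: indicator_def)

lemma kt_surv_b:
  assumes J: "J \<in> Ic" "mono J" and s: "s \<ge> 0"
  shows "0 \<le> kt (survI q lam J s)" "kt (survI q lam J s) \<le> (1 + th + al) * q * exp (- lam * s)"
proof -
  have a: "0 \<le> survI q lam J s" "survI q lam J s \<le> S s" using per_s(3,4)[OF J s] by auto
  have "S s \<le> 1" using S_le[OF s] q1 by simp
  thus "0 \<le> kt (survI q lam J s)" using kt_nonneg a by simp
  have "kt (survI q lam J s) \<le> (1 + th + al) * survI q lam J s" using kt_le a by simp
  also have "\<dots> \<le> (1 + th + al) * S s"
    using a th0 al0 by (intro mult_left_mono) auto
  also have "\<dots> = (1 + th + al) * q * exp (- lam * s)" by (simp add: S_def)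
  finally show "kt (survI q lam J s) \<le> (1 + th + al) * q * exp (- lam * s)" .
qed

lemma kt_surv:
  assumes J: "J \<in> Ic" "mono J"
  shows "set_integrable lborel {0..} (\<lambda>s. kt (survI q lam J s))"
proof -
  define k2 where "k2 s = kt (survI q lam J (max 0 s))" for s
  have mono2: "mono (\<lambda>s. - survI q lam J (max 0 s))"
  proof (rule monoI)
    fix s t :: real assume "s \<le> t"
    hence "survI q lam J (max 0 t) \<le> survI q lam J (max 0 s)" by (intro surv_anti[OF J]) auto
    thus "- survI q lam J (max 0 s) \<le> - survI q lam J (max 0 t)" by simp
  qed
  have sm: "(\<lambda>s. - survI q lam J (max 0 s)) \<in> borel_measurable borel" by (rule borel_measurable_mono[OF mono2])
  have sm2[measurable]: "(\<lambda>s. survI q lam J (max 0 s)) \<in> borel_measurable borel"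
    using borel_measurable_uminus[OF sm] by simp
  have k2m[measurable]: "k2 \<in> borel_measurable borel"
    unfolding k2_def[abs_def] kt_alt by measurable
  have i: "set_integrable lborel {0..} (\<lambda>s. ((1 + th + al) * q) * exp (- lam * s))"
    using exp_tail0[OF lam0] by simp
  have "set_integrable lborel {0..} k2"
  proof (rule set_integrable_bound[OF i])
    show "set_borel_measurable lborel {0..} k2" unfolding set_borel_measurable_def by measurable
    show "AE x in lborel. x \<in> {0..} \<longrightarrow> norm (k2 x) \<le> norm ((1 + th + al) * q * exp (- lam * x))"
    proof (intro AE_I2 impI)
      fix x :: real assume x: "x \<in> {0..}"
      hence x0: "x \<ge> 0" by simp
      have "k2 x = kt (survI q lam J x)" using x0 by (simp add: k2_def)
      thus "norm (k2 x) \<le> norm ((1 + th + al) * q * exp (- lam * x))"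
        using kt_surv_b[OF J x0] th0 al0 q0 by simp
    qed
  qed
  moreover have "set_integrable lborel {0..} k2 = set_integrable lborel {0..} (\<lambda>s. kt (survI q lam J s))"
    by (rule set_integrable_cong) (auto simp: k2_def)
  ultimately show ?thesis by simp
qed

lemma core:
  assumes J: "J \<in> Ic" "mono J"
  shows "set_integrable lborel {0<..} (\<lambda>x. fd x * hh x * J x)"
    "(LINT x:{0<..}|lborel. fd x * hh x * J x) \<le> Aa d * premium th al q lam J"
    "(\<forall>x. 0 \<le> x \<and> x \<le> d \<longrightarrow> J x = 0) \<Longrightarrow> (LINT x:{0<..}|lborel. fd x * hh x * J x) = Aa d * premium th al q lam J"
proof -
  have Jm[measurable]: "J \<in> borel_measurable borel" by (rule borel_measurable_mono[OF J(2)])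
  have c: "0 \<le> Aa d * (1 + th + al)" using Aa_pos[OF d0] th0 al0 by simp
  have i: "set_integrable lborel {0<..} (\<lambda>x. (Aa d * (1 + th + al)) * (x * fd x))"
    using x_fd_int by simp
  show int: "set_integrable lborel {0<..} (\<lambda>x. fd x * hh x * J x)"
  proof (rule set_integrable_bound[OF i])
    show "set_borel_measurable lborel {0<..} (\<lambda>x. fd x * hh x * J x)"
      unfolding set_borel_measurable_def by measurable
    show "AE x in lborel. x \<in> {0<..} \<longrightarrow> norm (fd x * hh x * J x) \<le> norm (Aa d * (1 + th + al) * (x * fd x))"
    proof (intro AE_I2 impI)
      fix x :: real assume x: "x \<in> {0<..}"
      have J0: "0 \<le> J x" "J x \<le> x" using Ic_ge[OF J(1)] Ic_le[OF J(1)] x by auto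
      have "fd x * hh x * J x \<le> fd x * (Aa d * (1 + th + al)) * x"
        using hh_bound[of x] fd_pos[of x] hh_pos[of x] J0 x
        by (intro mult_mono) (auto intro: mult_left_mono)
      thus "norm (fd x * hh x * J x) \<le> norm (Aa d * (1 + th + al) * (x * fd x))"
        using fd_pos[of x] hh_pos[of x] J0 c x by (simp add: algebra_simps)
    qed
  qed
  have L: "(\<integral>\<^sup>+x. ennreal (gg x * J x) \<partial>lborel) = ennreal (LINT x:{0<..}|lborel. fd x * hh x * J x)"
  proof -
    have "(\<integral>\<^sup>+x. ennreal (gg x * J x) \<partial>lborel) = (\<integral>\<^sup>+x. ennreal (indicator {0<..} x * (fd x * hh x * J x)) \<partial>lborel)"
      by (simp add: gg_def mult.assoc)
    also have "\<dots> = ennreal (LINT x|lborel. indicator {0<..} x * (fd x * hh x * J x))"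
      by (rule nn_integral_eq_integral)
        (use int in \<open>auto simp: set_integrable_def indicator_def intro!: AE_I2 mult_nonneg_nonneg less_imp_le[OF fd_pos] less_imp_le[OF hh_pos] Ic_ge[OF J(1)]\<close>)
    finally show ?thesis by (simp add: set_lebesgue_integral_def)
  qed
  have ki: "set_integrable lborel {0..} (\<lambda>s. Aa d * kt (survI q lam J s))" using kt_surv(1)[OF J] by simp
  have R: "(\<integral>\<^sup>+s. indicator {0..} s * ennreal (Aa d * kt (survI q lam J s)) \<partial>lborel) = ennreal (Aa d * premium th al q lam J)"
  proof -
    have "(\<integral>\<^sup>+s. indicator {0..} s * ennreal (Aa d * kt (survI q lam J s)) \<partial>lborel)
        = (\<integral>\<^sup>+s. ennreal (indicator {0..} s * (Aa d * kt (survI q lam J s))) \<partial>lborel)"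
      by (rule nn_integral_cong) (simp add: indicator_def)
    also have "\<dots> = ennreal (LINT s|lborel. indicator {0..} s * (Aa d * kt (survI q lam J s)))"
      by (rule nn_integral_eq_integral)
        (use ki kt_surv_b(1)[OF J] Aa_pos[OF d0] in \<open>auto simp: set_integrable_def indicator_def intro!: AE_I2\<close>)
    also have "(LINT s|lborel. indicator {0..} s * (Aa d * kt (survI q lam J s))) = (LINT s:{0..}|lborel. Aa d * kt (survI q lam J s))"
      by (simp only: set_lebesgue_integral_def real_scaleR_def)
    also have "\<dots> = Aa d * (LINT s:{0..}|lborel. kt (survI q lam J s))" by (rule set_integral_mult_right)
    also have "\<dots> = Aa d * premium th al q lam J" by (simp add: premium_def kt_def)
    finally show ?thesis .
  qed
  have T: "(\<integral>\<^sup>+x. ennreal (gg x * J x) \<partial>lborel)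
       = (\<integral>\<^sup>+s. indicator {0..} s * (\<integral>\<^sup>+x. ennreal (gg x * (if s < J x then 1 else 0)) \<partial>lborel) \<partial>lborel)"
    by (rule tonelli[OF J])
  have pr0: "0 \<le> Aa d * premium th al q lam J"
  proof -
    have "0 \<le> (LINT s:{0..}|lborel. kt (survI q lam J s))"
      by (rule set_nonneg) (use kt_surv_b(1)[OF J] in auto)
    thus ?thesis using Aa_pos[OF d0] unfolding premium_def kt_def by simp
  qed
  have "ennreal (LINT x:{0<..}|lborel. fd x * hh x * J x) \<le> ennreal (Aa d * premium th al q lam J)"
    unfolding L[symmetric] T R[symmetric]
    by (rule nn_integral_mono) (use per_s(1)[OF J] in \<open>auto simp: gg_def indicator_def mult.assoc\<close>)
  thus "(LINT x:{0<..}|lborel. fd x * hh x * J x) \<le> Aa d * premium th al q lam J"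
    using pr0 by simp
  assume v: "\<forall>x. 0 \<le> x \<and> x \<le> d \<longrightarrow> J x = 0"
  have "ennreal (LINT x:{0<..}|lborel. fd x * hh x * J x) = ennreal (Aa d * premium th al q lam J)"
    unfolding L[symmetric] T R[symmetric]
    by (rule nn_integral_cong) (use per_s(2)[OF J _ v] in \<open>auto simp: gg_def indicator_def mult.assoc\<close>)
  moreover have "0 \<le> (LINT x:{0<..}|lborel. fd x * hh x * J x)"
  proof (rule set_nonneg)
    fix x :: real assume "x \<in> {0<..}"
    thus "0 \<le> fd x * hh x * J x" using fd_pos[of x] hh_pos[of x] Ic_ge[OF J(1), of x] by simp
  qed
  ultimately show "(LINT x:{0<..}|lborel. fd x * hh x * J x) = Aa d * premium th al q lam J"
    using pr0 by simp
qed

end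



lemma u_form:
  fixes u :: "real \<Rightarrow> real" and g :: real
  assumes g: "g > 0" and hu: "\<And>x. (u has_real_derivative exp (- g * x)) (at x)"
  shows "\<exists>C. \<forall>y. u y = C - exp (- g * y) / g"
proof -
  define v where "v y = u y + exp (- g * y) / g" for y
  have "\<forall>x. DERIV v x :> 0"
  proof
    fix x
    have "(v has_real_derivative exp (- g * x) + exp (- g * x) * (- g) / g) (at x)"
      unfolding v_def[abs_def] using g by (auto intro!: derivative_eq_intros hu)
    thus "DERIV v x :> 0" using g by simp
  qed
  hence "\<And>y. v y = v 0" by (metis DERIV_isconst_all)
  thus ?thesis by (intro exI[of _ "v 0"]) (auto simp: v_def algebra_simps)
qed

lemma gap_nonneg:
  fixes g a b :: real assumes g: "g > 0"
  shows "exp (- g * a) / g * (exp (- g * (b - a)) - 1 + g * (b - a)) \<ge> 0"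
  using exp_ge_add_one_self[of "- g * (b - a)"] g by simp

lemma gap_zero:
  fixes g a b :: real assumes g: "g > 0"
    and z: "exp (- g * a) / g * (exp (- g * (b - a)) - 1 + g * (b - a)) = 0"
  shows "b = a"
proof -
  have "exp (- g * (b - a)) - 1 + g * (b - a) = 0" using z g by simp
  hence "\<not> (1 - g * (b - a) < exp (- (g * (b - a))))" by simp
  hence "g * (b - a) = 0" using exp_minus_greater[of "g * (b - a)"] by blast
  thus ?thesis using g by simp
qed

lemma u_gap:
  fixes g a b C :: real assumes g: "g > 0"
  shows "C - exp (- g * b) / g = (C - exp (- g * a) / g) + exp (- g * a) * (b - a)
          - exp (- g * a) / g * (exp (- g * (b - a)) - 1 + g * (b - a))"
proof -
  have "exp (- g * b) = exp (- g * a) * exp (- g * (b - a))" by (simp add: exp_add[symmetric] algebra_simps)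
  thus ?thesis using g by (simp add: field_simps)
qed


locale prmu = prmd +
  fixes w C :: real
begin

definition uu :: "real \<Rightarrow> real" where "uu y = C - exp (- g * y) / g"
definition P0 where "P0 = premium th al q lam Ist"
definition K where "K = exp (- g * (w - P0))"
definition Wst where "Wst x = w - x + Ist x - P0"

lemma Zf_eq: "exp (- g * Wst x) = K * hh x"
  unfolding K_def hh_def Wst_def by (simp add: exp_add[symmetric] algebra_simps)

lemma K_pos: "K > 0" by (simp add: K_def)

lemma fdhh_int: "set_integrable lborel {0<..} (\<lambda>x. fd x * hh x)" by (rule fh_int(1))

lemma Ist_EU_int: "set_integrable lborel {0<..} (\<lambda>x. fd x * uu (Wst x))"
proof -
  have e: "fd x * uu (Wst x) = C * fd x - (K / g) * (fd x * hh x)" for x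
    unfolding uu_def using Zf_eq[of x] by (simp add: algebra_simps)
  show ?thesis unfolding e using fd_tail(1)[of 0] fdhh_int by simp
qed

lemma EU_Ist_int: "EU_integrable uu w th al q lam Ist"
  using Ist_EU_int unfolding EU_integrable_def ExpX_integrable_def Wst_def P0_def fd_def by simp

lemma EU_Ist: "EU uu w th al q lam Ist = (1 - q) * uu (Wst 0) + (LINT x:{0<..}|lborel. fd x * uu (Wst x))"
  unfolding EU_def ExpX_def Wst_def P0_def fd_def by simp

lemma EU_identity:
  assumes J: "J \<in> Ic" "mono J" and int: "EU_integrable uu w th al q lam J"
  shows "\<exists>G0 G. G0 \<ge> 0 \<and> G \<ge> 0 \<and>
     EU uu w th al q lam J = EU uu w th al q lam Ist
        + K * ((LINT x:{0<..}|lborel. fd x * hh x * J x) - Aa d * premium th al q lam J) - (1 - q) * G0 - G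
     \<and> (G = 0 \<longrightarrow> (AE x in lborel. x > 0 \<longrightarrow> J x - Ist x = premium th al q lam J - P0))"
proof -
  have Jm[measurable]: "J \<in> borel_measurable borel" by (rule borel_measurable_mono[OF J(2)])
  define PJ where "PJ = premium th al q lam J"
  define WJ where "WJ x = w - x + J x - PJ" for x
  define dl where "dl x = WJ x - Wst x" for x
  define gp where "gp x = exp (- g * Wst x) / g * (exp (- g * (WJ x - Wst x)) - 1 + g * (WJ x - Wst x))" for x
  have gp0: "gp x \<ge> 0" for x unfolding gp_def by (rule gap_nonneg[OF g0])
  have ug: "uu (WJ x) = uu (Wst x) + exp (- g * Wst x) * dl x - gp x" for x
    unfolding uu_def gp_def dl_def using u_gap[OF g0, of C "WJ x" "Wst x"] by simp
  have dl_eq: "dl x = J x - Ist x - (PJ - P0)" for x unfolding dl_def WJ_def Wst_def by simp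
  have T: "set_integrable lborel {0<..} (\<lambda>x. fd x * uu (WJ x))"
    using int unfolding EU_integrable_def ExpX_integrable_def WJ_def PJ_def fd_def by simp
  have EJ: "EU uu w th al q lam J = (1 - q) * uu (WJ 0) + (LINT x:{0<..}|lborel. fd x * uu (WJ x))"
    unfolding EU_def ExpX_def WJ_def PJ_def fd_def by simp
  have cJ: "set_integrable lborel {0<..} (\<lambda>x. fd x * hh x * J x)" by (rule core(1)[OF J])
  have cI: "set_integrable lborel {0<..} (\<lambda>x. fd x * hh x * Ist x)" by (rule core(1)[OF Ist_Ic Ist_monoI])
  have vI: "(LINT x:{0<..}|lborel. fd x * hh x * Ist x) = Aa d * P0"
    unfolding P0_def by (rule core(3)[OF Ist_Ic Ist_monoI]) (simp add: Ist_le_d)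
  define M where "M x = K * (fd x * hh x * J x) - K * (fd x * hh x * Ist x) - (K * (PJ - P0)) * (fd x * hh x)" for x
  have Mi: "set_integrable lborel {0<..} M"
    unfolding M_def using cJ cI fdhh_int by simp
  have Mv: "(LINT x:{0<..}|lborel. M x) = K * (LINT x:{0<..}|lborel. fd x * hh x * J x) - K * (Aa d * P0)
      - (K * (PJ - P0)) * (LINT x:{0<..}|lborel. fd x * hh x)"
    unfolding M_def using cJ cI fdhh_int vI by simp
  have pt: "fd x * gp x = (fd x * uu (Wst x) + M x) - fd x * uu (WJ x)" for x
    unfolding M_def ug dl_eq Zf_eq by (simp add: algebra_simps)
  have Gi: "set_integrable lborel {0<..} (\<lambda>x. fd x * gp x)"
    unfolding pt using Ist_EU_int Mi T by simp
  define G where "G = (LINT x:{0<..}|lborel. fd x * gp x)"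
  have Gv: "G = (LINT x:{0<..}|lborel. fd x * uu (Wst x)) + (LINT x:{0<..}|lborel. M x) - (LINT x:{0<..}|lborel. fd x * uu (WJ x))"
    unfolding G_def pt using Ist_EU_int Mi T by simp
  have G0: "G \<ge> 0" unfolding G_def by (rule set_nonneg) (use fd_pos gp0 in \<open>simp add: less_imp_le\<close>)
  have u0: "uu (WJ 0) = uu (Wst 0) + K * (- (PJ - P0)) - gp 0"
    using ug[of 0] dl_eq[of 0] Zf_eq[of 0] hh0 Ic_0[OF J(1)] Ist_0 by simp
  have H: "(LINT x:{0<..}|lborel. fd x * hh x) = Aa d - (1 - q)" using Eh hh0 by simp
  have main: "EU uu w th al q lam J = EU uu w th al q lam Ist
        + K * ((LINT x:{0<..}|lborel. fd x * hh x * J x) - Aa d * PJ) - (1 - q) * gp 0 - G"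
    unfolding EJ EU_Ist u0 Gv Mv H by (simp add: algebra_simps)
  have ae: "G = 0 \<longrightarrow> (AE x in lborel. x > 0 \<longrightarrow> J x - Ist x = PJ - P0)"
  proof
    assume "G = 0"
    hence "(LINT x|lborel. indicator {0<..} x * (fd x * gp x)) = 0"
      unfolding G_def set_lebesgue_integral_def by simp
    moreover have "integrable lborel (\<lambda>x. indicator {0<..} x * (fd x * gp x))"
      using Gi unfolding set_integrable_def by simp
    ultimately have "AE x in lborel. indicator {0<..} x * (fd x * gp x) = 0"
      using integral_nonneg_eq_0_iff_AE[of lborel "\<lambda>x. indicator {0<..} x * (fd x * gp x)"]
        fd_pos gp0 by (simp add: less_imp_le)
    thus "AE x in lborel. x > 0 \<longrightarrow> J x - Ist x = PJ - P0"
    proof (rule eventually_mono, intro impI)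
      fix x :: real assume a: "indicator {0<..} x * (fd x * gp x) = 0" and x: "x > 0"
      hence "gp x = 0" using fd_pos[of x] by simp
      hence "WJ x = Wst x" unfolding gp_def by (rule gap_zero[OF g0])
      thus "J x - Ist x = PJ - P0" unfolding WJ_def Wst_def by simp
    qed
  qed
  show ?thesis using gp0[of 0] G0 main ae unfolding PJ_def by blast
qed

end

lemma agree_defs:
  assumes a: "\<And>x. x \<ge> 0 \<Longrightarrow> J x = J' x"
  shows "survI q lam J = survI q lam J'"
    "premium th al q lam J = premium th al q lam J'"
    "EU u w th al q lam J = EU u w th al q lam J'"
    "EU_integrable u w th al q lam J = EU_integrable u w th al q lam J'"
proof -
  show s: "survI q lam J = survI q lam J'"
  proof (rule ext)
    fix t
    have "(LINT x:{0<..}|lborel. q * lam * exp (- lam * x) * (if t < J x then 1 else 0))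
        = (LINT x:{0<..}|lborel. q * lam * exp (- lam * x) * (if t < J' x then 1 else 0))"
      by (rule set_lebesgue_integral_cong) (use a in auto)
    thus "survI q lam J t = survI q lam J' t" unfolding survI_def ExpX_def using a[of 0] by simp
  qed
  show p: "premium th al q lam J = premium th al q lam J'" unfolding premium_def s ..
  show "EU u w th al q lam J = EU u w th al q lam J'"
  proof -
    have "(LINT x:{0<..}|lborel. q * lam * exp (- lam * x) * u (w - x + J x - premium th al q lam J'))
        = (LINT x:{0<..}|lborel. q * lam * exp (- lam * x) * u (w - x + J' x - premium th al q lam J'))"
      by (rule set_lebesgue_integral_cong) (use a in auto)
    thus ?thesis unfolding EU_def ExpX_def p using a[of 0] by simp
  qed
  show "EU_integrable u w th al q lam J = EU_integrable u w th al q lam J'"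
    unfolding EU_integrable_def ExpX_integrable_def p
    by (rule set_integrable_cong) (use a in auto)
qed

lemma norm_Ic:
  assumes J: "J \<in> Ic"
  shows "(\<lambda>x. J (max 0 x)) \<in> Ic" "mono (\<lambda>x. J (max 0 x))"
proof -
  show "(\<lambda>x. J (max 0 x)) \<in> Ic" using J unfolding Ic_def by auto
  show "mono (\<lambda>x. J (max 0 x))"
  proof (rule monoI)
    fix x y :: real assume "x \<le> y"
    hence "0 \<le> max 0 x" "max 0 x \<le> max 0 y" by auto
    thus "J (max 0 x) \<le> J (max 0 y)" using J unfolding Ic_def by fastforce
  qed
qed

lemma c_zero:
  assumes I: "I \<in> Ic" and J: "J \<in> Ic" and ae: "AE x in lborel. x > 0 \<longrightarrow> I x - J x = c"
  shows "c = 0"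
proof (rule ccontr)
  assume c: "c \<noteq> 0"
  define e where "e = \<bar>c\<bar>"
  have e0: "e > 0" using c by (simp add: e_def)
  have "AE x in lborel. x \<notin> {0<..<e}"
    using ae
  proof (rule eventually_mono)
    fix x :: real assume h: "x > 0 \<longrightarrow> I x - J x = c"
    show "x \<notin> {0<..<e}"
    proof
      assume x: "x \<in> {0<..<e}"
      hence "I x - J x = c" using h by simp
      moreover have "0 \<le> I x" "I x \<le> x" "0 \<le> J x" "J x \<le> x" using I J x unfolding Ic_def by auto
      ultimately have "\<bar>c\<bar> \<le> x" by linarith
      thus False using x by (simp add: e_def)
    qed
  qed
  moreover have "{x \<in> space lborel. \<not> (x \<notin> {0<..<e})} = {0<..<e}" by auto
  moreover have m: "{0<..<e} \<in> sets lborel" by simp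
  ultimately have "emeasure lborel {0<..<e} = 0"
    using AE_iff_measurable[OF m, of "\<lambda>x. x \<notin> {0<..<e}"] by blast
  thus False using e0 by simp
qed

context prmu begin

lemma Ist_optimal: "optimal uu w th al q lam Ist"
  unfolding optimal_def
proof (intro conjI ballI impI)
  show "Ist \<in> Ic" by (rule Ist_Ic)
  show "EU_integrable uu w th al q lam Ist" by (rule EU_Ist_int)
  fix J assume J: "J \<in> Ic" and int: "EU_integrable uu w th al q lam J"
  define Jn where "Jn x = J (max 0 x)" for x
  have ag: "\<And>x. x \<ge> 0 \<Longrightarrow> J x = Jn x" by (simp add: Jn_def)
  have Jn: "Jn \<in> Ic" "mono Jn" using norm_Ic[OF J] unfolding Jn_def[abs_def] by auto
  have intn: "EU_integrable uu w th al q lam Jn" using int agree_defs(4)[OF ag] by simp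
  obtain G0 G where GG: "G0 \<ge> 0" "G \<ge> 0" and eq: "EU uu w th al q lam Jn = EU uu w th al q lam Ist
        + K * ((LINT x:{0<..}|lborel. fd x * hh x * Jn x) - Aa d * premium th al q lam Jn) - (1 - q) * G0 - G"
    using EU_identity[OF Jn intn] by blast
  have "K * ((LINT x:{0<..}|lborel. fd x * hh x * Jn x) - Aa d * premium th al q lam Jn) \<le> 0"
    using core(2)[OF Jn] K_pos by (simp add: mult_nonneg_nonpos)
  moreover have "(1 - q) * G0 \<ge> 0" using GG q1 by simp
  ultimately have "EU uu w th al q lam Jn \<le> EU uu w th al q lam Ist" using eq GG by linarith
  thus "EU uu w th al q lam J \<le> EU uu w th al q lam Ist" using agree_defs(3)[OF ag] by simp
qed

lemma Ist_unique:
  assumes opt: "optimal uu w th al q lam I"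
  shows "ae_equal_X q I Ist"
proof -
  have I: "I \<in> Ic" and int: "EU_integrable uu w th al q lam I"
    and ge: "EU uu w th al q lam Ist \<le> EU uu w th al q lam I"
    using opt Ist_Ic EU_Ist_int unfolding optimal_def by auto
  define In where "In x = I (max 0 x)" for x
  have ag: "\<And>x. x \<ge> 0 \<Longrightarrow> I x = In x" by (simp add: In_def)
  have In: "In \<in> Ic" "mono In" using norm_Ic[OF I] unfolding In_def[abs_def] by auto
  have intn: "EU_integrable uu w th al q lam In" using int agree_defs(4)[OF ag] by simp
  have gen: "EU uu w th al q lam Ist \<le> EU uu w th al q lam In" using ge agree_defs(3)[OF ag] by simp
  obtain G0 G where GG: "G0 \<ge> 0" "G \<ge> 0" and eq: "EU uu w th al q lam In = EU uu w th al q lam Ist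
        + K * ((LINT x:{0<..}|lborel. fd x * hh x * In x) - Aa d * premium th al q lam In) - (1 - q) * G0 - G"
     and ae: "G = 0 \<longrightarrow> (AE x in lborel. x > 0 \<longrightarrow> In x - Ist x = premium th al q lam In - P0)"
    using EU_identity[OF In intn] by blast
  have "K * ((LINT x:{0<..}|lborel. fd x * hh x * In x) - Aa d * premium th al q lam In) \<le> 0"
    using core(2)[OF In] K_pos by (simp add: mult_nonneg_nonpos)
  moreover have "(1 - q) * G0 \<ge> 0" using GG q1 by simp
  ultimately have "G = 0" using eq GG gen by linarith
  hence ae2: "AE x in lborel. x > 0 \<longrightarrow> In x - Ist x = premium th al q lam In - P0" using ae by simp
  have c0: "premium th al q lam In - P0 = 0" by (rule c_zero[OF In(1) Ist_Ic ae2])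
  have "AE x in lborel. x > 0 \<longrightarrow> I x = Ist x"
    using ae2 by (rule eventually_mono) (use c0 ag in auto)
  moreover have "I 0 = Ist 0" using Ic_0[OF I] Ist_0 by simp
  ultimately show ?thesis unfolding ae_equal_X_def by simp
qed

end

theorem proposition4p6:
  fixes q lam \<gamma> \<theta> \<alpha> w :: real and u :: "real \<Rightarrow> real"
  assumes hq: "0 < q" "q \<le> 1"
    and hlam: "lam > 0" and hgam: "\<gamma> > 0"
    and h\<theta>: "\<theta> \<ge> 0" and h\<alpha>: "\<alpha> \<ge> 0"
    and hu: "\<And>x. (u has_real_derivative exp (- \<gamma> * x)) (at x)"
    and hcond: "\<gamma> * ((1 + \<theta>) + \<alpha> * (1 - 2 * q)) > 2 * \<alpha> * q * lam"
  shows "(\<exists>!d. d \<ge> 0 \<and> dstar_eq \<theta> \<alpha> q lam \<gamma> d) \<and>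
         (\<forall>d. d \<ge> 0 \<and> dstar_eq \<theta> \<alpha> q lam \<gamma> d \<longrightarrow>
            optimal u w \<theta> \<alpha> q lam (Istar \<theta> \<alpha> q lam \<gamma> d) \<and>
            (\<forall>I. optimal u w \<theta> \<alpha> q lam I \<longrightarrow> ae_equal_X q I (Istar \<theta> \<alpha> q lam \<gamma> d)) \<and>
            (d > 0 \<longleftrightarrow> (\<theta> > 0 \<or> (q < 1 \<and> \<alpha> > 0))))"
proof -
  interpret P: prm q lam \<gamma> \<theta> \<alpha> using assms by unfold_locales auto
  obtain C where C: "\<And>y. u y = C - exp (- \<gamma> * y) / \<gamma>" using u_form[OF hgam hu] by blast
  have ex: "\<exists>!d. d \<ge> 0 \<and> dstar_eq \<theta> \<alpha> q lam \<gamma> d"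
  proof -
    obtain d where d: "d \<ge> 0" "P.F d = 0" using P.F_root_exists by blast
    show ?thesis
    proof (rule ex1I[of _ d])
      show "d \<ge> 0 \<and> dstar_eq \<theta> \<alpha> q lam \<gamma> d" using d P.dstar_iff by simp
      fix d' assume "d' \<ge> 0 \<and> dstar_eq \<theta> \<alpha> q lam \<gamma> d'"
      thus "d' = d" using P.dstar_iff P.F_unique d by blast
    qed
  qed
  have rest: "\<forall>d. d \<ge> 0 \<and> dstar_eq \<theta> \<alpha> q lam \<gamma> d \<longrightarrow>
            optimal u w \<theta> \<alpha> q lam (Istar \<theta> \<alpha> q lam \<gamma> d) \<and>
            (\<forall>I. optimal u w \<theta> \<alpha> q lam I \<longrightarrow> ae_equal_X q I (Istar \<theta> \<alpha> q lam \<gamma> d)) \<and>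
            (d > 0 \<longleftrightarrow> (\<theta> > 0 \<or> (q < 1 \<and> \<alpha> > 0)))"
  proof (intro allI impI, elim conjE)
    fix d assume d: "d \<ge> 0" "dstar_eq \<theta> \<alpha> q lam \<gamma> d"
    have Fd: "P.F d = 0" using P.dstar_iff d by simp
    interpret U: prmu q lam \<gamma> \<theta> \<alpha> d w C by unfold_locales (use d Fd in auto)
    have uu: "U.uu = u" by (rule ext) (simp add: U.uu_def C)
    have Ist: "U.Ist = Istar \<theta> \<alpha> q lam \<gamma> d" by (simp add: U.Ist_def)
    show "optimal u w \<theta> \<alpha> q lam (Istar \<theta> \<alpha> q lam \<gamma> d) \<and>
            (\<forall>I. optimal u w \<theta> \<alpha> q lam I \<longrightarrow> ae_equal_X q I (Istar \<theta> \<alpha> q lam \<gamma> d)) \<and>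
            (d > 0 \<longleftrightarrow> (\<theta> > 0 \<or> (q < 1 \<and> \<alpha> > 0)))"
      using U.Ist_optimal U.Ist_unique P.root_pos_iff[OF d(1) Fd] unfolding uu Ist by blast
  qed
  show ?thesis using ex rest by blast
qed

end
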